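(* Let $T$ be a tournament, let $P=x_0x_1\ldots x_r$ be a path of length $r$ in $T$, and let $z\in V(T)\setminus V(P)$ be a vertex such that every vertex of $\{x_{\alpha+1},x_{\alpha+2},\ldots,x_r\}$ dominates $z$ and $z$ dominates every vertex of $\{x_0,x_1,\ldots,x_\alpha\}$, where $\alpha\in[2,r-3]$. Assume that $T$ contains no $(x_0,x_r)$-path of length $r+1$ whose vertex set is $\{z\}\cup V(P)$. Suppose that $x_sx_t$ is an arc of $T$ with $s\in[1,\alpha-1]$ and $t\in[\alpha+3,r]$. Then: if $s\geq 3$, no vertex of $\{x_0,x_1,\ldots,x_{s-2}\}$ dominates a vertex of $\{x_{\alpha+2},x_{\alpha+3},\ldots,x_{t-1}\}$; and if $t-s\neq 5$, then $x_{s-1}$ dominates no vertex of $\{x_{\alpha+2},x_{\alpha+3},\ldots,x_{t-1}\}$.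
   Context: Paths are directed and simple; the length of a path is its number of arcs. A vertex $u$ dominates $v$ if $uv$ is an arc. $[a,b]$ denotes the integers from $a$ to $b$. *)

theory Defs
  imports Main
begin

text \<open>A tournament on a finite vertex set V with arc relation A (A u v means u dominates v).\<close>
definition tournament :: "'a set \<Rightarrow> ('a \<Rightarrow> 'a \<Rightarrow> bool) \<Rightarrow> bool" where
  "tournament V A \<longleftrightarrow> finite V
     \<and> (\<forall>u v. A u v \<longrightarrow> u \<in> V \<and> v \<in> V)
     \<and> (\<forall>v. \<not> A v v)
     \<and> (\<forall>u\<in>V. \<forall>v\<in>V. u \<noteq> v \<longrightarrow> (A u v \<longleftrightarrow> \<not> A v u))"

text \<open>A directed simple path given as a list of vertices; its length is (length ps - 1) arcs.\<close>
definition is_path :: "'a set \<Rightarrow> ('a \<Rightarrow> 'a \<Rightarrow> bool) \<Rightarrow> 'a list \<Rightarrow> bool" where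
  "is_path V A ps \<longleftrightarrow> ps \<noteq> [] \<and> distinct ps \<and> set ps \<subseteq> V
     \<and> (\<forall>i. Suc i < length ps \<longrightarrow> A (ps ! i) (ps ! Suc i))"

end

theory Submission
  imports Defs
begin

locale setting =
  fixes V :: "'a set" and A :: "'a \<Rightarrow> 'a \<Rightarrow> bool" and x :: "nat \<Rightarrow> 'a"
    and r \<alpha> :: nat and z :: 'a
  assumes T: "tournament V A"
    and P: "is_path V A (map x [0..<Suc r])"
    and zV: "z \<in> V" and zP: "z \<notin> x ` {0..r}"
    and dom1: "\<forall>i\<in>{\<alpha>+1..r}. A (x i) z"
    and dom2: "\<forall>i\<in>{0..\<alpha>}. A z (x i)"
    and alpha: "2 \<le> \<alpha>" "\<alpha> + 3 \<le> r"
    and nopath: "\<not> (\<exists>ps. is_path V A ps \<and> length ps = r + 2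
                    \<and> hd ps = x 0 \<and> last ps = x r
                    \<and> set ps = insert z (x ` {0..r}))"
begin

lemma xV: "k \<le> r \<Longrightarrow> x k \<in> V"
proof -
  assume k: "k \<le> r"
  have "set (map x [0..<Suc r]) \<subseteq> V" using P unfolding is_path_def by blast
  moreover have "x k \<in> set (map x [0..<Suc r])" using k by (simp del: upt_Suc)
  ultimately show ?thesis by blast
qed

lemma injx: "inj_on x {0..r}"
proof -
  have "distinct (map x [0..<Suc r])" using P unfolding is_path_def by blast
  then have "inj_on x (set [0..<Suc r])" by (simp add: distinct_map del: upt_Suc)
  moreover have "set [0..<Suc r] = {0..r}" by (auto simp del: upt_Suc)
  ultimately show ?thesis by metis
qed

lemma stepx: "k < r \<Longrightarrow> A (x k) (x (Suc k))"
proof -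
  assume k: "k < r"
  have "A (map x [0..<Suc r] ! k) (map x [0..<Suc r] ! Suc k)"
    using P k unfolding is_path_def by auto
  then show ?thesis using k by (simp del: upt_Suc)
qed

lemma flip: "k \<le> r \<Longrightarrow> l \<le> r \<Longrightarrow> k \<noteq> l \<Longrightarrow> \<not> A (x k) (x l) \<Longrightarrow> A (x l) (x k)"
proof -
  assume "k \<le> r" "l \<le> r" "k \<noteq> l" "\<not> A (x k) (x l)"
  moreover have "x k \<noteq> x l" using injx \<open>k \<le> r\<close> \<open>l \<le> r\<close> \<open>k \<noteq> l\<close>
    by (auto dest: inj_onD)
  ultimately show ?thesis using T xV unfolding tournament_def by metis
qed

lemma xz: "\<alpha>+1 \<le> k \<Longrightarrow> k \<le> r \<Longrightarrow> A (x k) z" using dom1 by auto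
lemma zx: "k \<le> \<alpha> \<Longrightarrow> A z (x k)" using dom2 by auto

definition hpx :: "'a \<Rightarrow> 'a \<Rightarrow> nat set \<Rightarrow> bool \<Rightarrow> bool" where
  "hpx u v I b \<longleftrightarrow> I \<subseteq> {0..r} \<and> (\<exists>ps. is_path V A ps \<and> hd ps = u \<and> last ps = v
      \<and> set ps = x ` I \<union> (if b then {z} else {}))"

lemma join:
  assumes h1: "hpx u v I b" and h2: "hpx u' v' I' b'" and d: "I \<inter> I' = {}"
    and nb: "\<not> (b \<and> b')" and a: "A v u'"
  shows "hpx u v' (I \<union> I') (b \<or> b')"
proof -
  obtain ps where p: "is_path V A ps" "hd ps = u" "last ps = v"
    "set ps = x ` I \<union> (if b then {z} else {})" and I: "I \<subseteq> {0..r}"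
    using h1 unfolding hpx_def by blast
  obtain qs where q: "is_path V A qs" "hd qs = u'" "last qs = v'"
    "set qs = x ` I' \<union> (if b' then {z} else {})" and I': "I' \<subseteq> {0..r}"
    using h2 unfolding hpx_def by blast
  have dx: "x ` I \<inter> x ` I' = {}"
  proof -
    have "x ` (I \<inter> I') = x ` I \<inter> x ` I'"
      using inj_on_image_Int[OF injx I I'] by simp
    then show ?thesis using d by simp
  qed
  have zI: "z \<notin> x ` I" "z \<notin> x ` I'" using zP I I' by auto
  have disj: "set ps \<inter> set qs = {}" using p(4) q(4) dx zI nb by auto
  have ne: "ps \<noteq> []" "qs \<noteq> []" using p(1) q(1) unfolding is_path_def by auto
  have "is_path V A (ps @ qs)"
    unfolding is_path_def
  proof (intro conjI allI impI)
    show "ps @ qs \<noteq> []" using ne by simp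
    show "distinct (ps @ qs)" using p(1) q(1) disj unfolding is_path_def by auto
    show "set (ps @ qs) \<subseteq> V" using p(1) q(1) unfolding is_path_def by auto
  next
    fix i assume i: "Suc i < length (ps @ qs)"
    consider (a) "Suc i < length ps" | (b) "Suc i = length ps" | (c) "Suc i > length ps" by linarith
    then show "A ((ps @ qs) ! i) ((ps @ qs) ! Suc i)"
    proof cases
      case a then show ?thesis using p(1) unfolding is_path_def by (simp add: nth_append)
    next
      case b
      have ii: "i = length ps - 1" using b by simp
      have "(ps @ qs) ! i = last ps" using b ne ii by (simp add: nth_append last_conv_nth)
      moreover have "(ps @ qs) ! Suc i = hd qs" using b ne by (simp add: nth_append hd_conv_nth)
      ultimately show ?thesis using a p q by simp
    next
      case c
      then obtain j where j: "i = length ps + j" by (metis less_Suc_eq_le le_add_diff_inverse less_imp_le_nat Suc_leI not_less_eq_eq)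
      have "Suc j < length qs" using i j by simp
      then have "A (qs ! j) (qs ! Suc j)" using q(1) unfolding is_path_def by auto
      then show ?thesis using j by (simp add: nth_append)
    qed
  qed
  moreover have "hd (ps @ qs) = u" using ne p by simp
  moreover have "last (ps @ qs) = v'" using ne q by simp
  moreover have "set (ps @ qs) = x ` (I \<union> I') \<union> (if b \<or> b' then {z} else {})"
    using p(4) q(4) by auto
  ultimately show ?thesis unfolding hpx_def using I I' by blast
qed

lemma seg: assumes "a \<le> b" "b \<le> r" shows "hpx (x a) (x b) {a..b} False"
proof -
  let ?ps = "map x [a..<Suc b]"
  have "is_path V A ?ps"
    unfolding is_path_def
  proof (intro conjI allI impI)
    show "?ps \<noteq> []" using assms by simp
    have "inj_on x (set [a..<Suc b])" by (rule inj_on_subset[OF injx]) (use assms in auto)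
    then show "distinct ?ps" by (simp add: distinct_map)
    show "set ?ps \<subseteq> V" using xV assms by auto
  next
    fix i assume "Suc i < length ?ps"
    then have i: "Suc i < Suc b - a" by (simp del: upt_Suc)
    then have "a + i < r" using assms by linarith
    then have "A (x (a+i)) (x (Suc (a+i)))" by (rule stepx)
    then show "A (?ps ! i) (?ps ! Suc i)" using i by (simp del: upt_Suc)
  qed
  moreover have "hd ?ps = x a" using assms by (simp add: hd_map del: upt_Suc)
  moreover have "last ?ps = x b" using assms by (simp add: last_map del: upt_Suc)
  moreover have "set ?ps = x ` {a..b}" by auto
  ultimately show ?thesis unfolding hpx_def using assms by auto
qed

lemma hz: "hpx z z {} True"
  unfolding hpx_def is_path_def using zV by (intro conjI exI[of _ "[z]"]) auto

lemma ext_seg: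
  assumes "hpx u v I b" "A v (x c)" "c \<le> d" "d \<le> r" "\<forall>k\<in>I. k < c \<or> d < k"
  shows "hpx u (x d) (I \<union> {c..d}) b"
proof -
  have "hpx u (x d) (I \<union> {c..d}) (b \<or> False)"
    by (rule join[OF assms(1) seg[OF assms(3,4)]]) (use assms in auto)
  then show ?thesis by simp
qed

lemma ext_z:
  assumes "hpx u v I False" "A v z"
  shows "hpx u z I True"
proof -
  have "hpx u z (I \<union> {}) (False \<or> True)"
    by (rule join[OF assms(1) hz]) (use assms in auto)
  then show ?thesis by simp
qed

lemma finish:
  assumes "hpx (x 0) (x r) I True" "I = {0..r}"
  shows False
proof -
  obtain ps where p: "is_path V A ps" "hd ps = x 0" "last ps = x r"
    "set ps = x ` {0..r} \<union> {z}"
    using assms unfolding hpx_def by auto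
  have "length ps = card (set ps)" using p(1) unfolding is_path_def by (simp add: distinct_card)
  also have "\<dots> = card (insert z (x ` {0..r}))" using p(4) by simp
  also have "\<dots> = Suc (card (x ` {0..r}))" using zP by simp
  also have "card (x ` {0..r}) = Suc r" using card_image[OF injx] by simp
  finally have "length ps = r + 2" by simp
  then show False using nopath p by auto
qed

end

context setting
begin

lemma Qrule:
  assumes "a < \<alpha>" "\<alpha>+2 \<le> c" "c \<le> r" "a+2 \<le> k" "k < c"
    "A (x a) (x k)" "A (x (k-1)) (x c)"
  shows False
proof -
  have "hpx (x 0) (x a) {0..a} False" by (rule seg) (use assms in auto)
  then have "hpx (x 0) (x (c-1)) ({0..a} \<union> {k..c-1}) False"
    by (rule ext_seg) (use assms in auto)
  then have "hpx (x 0) z ({0..a} \<union> {k..c-1}) True"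
    by (rule ext_z) (rule xz, use assms in auto)
  then have "hpx (x 0) (x (k-1)) ({0..a} \<union> {k..c-1} \<union> {a+1..k-1}) True"
    by (rule ext_seg) (use assms zx in auto)
  then have "hpx (x 0) (x r) ({0..a} \<union> {k..c-1} \<union> {a+1..k-1} \<union> {c..r}) True"
    by (rule ext_seg) (use assms in auto)
  then show False by (rule finish) (use assms in auto)
qed

lemma R1rule:
  assumes "s < \<alpha>" "\<alpha>+3 \<le> t" "t \<le> r" "A (x s) (x t)" "i < s" "\<alpha>+2 \<le> j" "j < t"
    "A (x i) (x j)" "A (x (j-1)) (x (i+1))"
  shows False
proof -
  have "hpx (x 0) (x i) {0..i} False" by (rule seg) (use assms in auto)
  then have "hpx (x 0) (x (t-1)) ({0..i} \<union> {j..t-1}) False"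
    by (rule ext_seg) (use assms in auto)
  then have "hpx (x 0) z ({0..i} \<union> {j..t-1}) True"
    by (rule ext_z) (rule xz, use assms in auto)
  then have "hpx (x 0) (x (j-1)) ({0..i} \<union> {j..t-1} \<union> {s+1..j-1}) True"
    by (rule ext_seg) (use assms zx in auto)
  then have "hpx (x 0) (x s) ({0..i} \<union> {j..t-1} \<union> {s+1..j-1} \<union> {i+1..s}) True"
    by (rule ext_seg) (use assms in auto)
  then have "hpx (x 0) (x r) ({0..i} \<union> {j..t-1} \<union> {s+1..j-1} \<union> {i+1..s} \<union> {t..r}) True"
    by (rule ext_seg) (use assms in auto)
  then show False by (rule finish) (use assms in auto)
qed

lemma R3rule:
  assumes "s < \<alpha>" "\<alpha>+3 \<le> t" "t \<le> r" "A (x s) (x t)" "i < s" "\<alpha>+2 \<le> j" "j < t"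
    "A (x i) (x j)" "A (x (t-1)) (x (s+1))"
  shows False
proof -
  have "hpx (x 0) (x i) {0..i} False" by (rule seg) (use assms in auto)
  then have "hpx (x 0) (x (t-1)) ({0..i} \<union> {j..t-1}) False"
    by (rule ext_seg) (use assms in auto)
  then have "hpx (x 0) (x (j-1)) ({0..i} \<union> {j..t-1} \<union> {s+1..j-1}) False"
    by (rule ext_seg) (use assms in auto)
  then have "hpx (x 0) z ({0..i} \<union> {j..t-1} \<union> {s+1..j-1}) True"
    by (rule ext_z) (rule xz, use assms in auto)
  then have "hpx (x 0) (x s) ({0..i} \<union> {j..t-1} \<union> {s+1..j-1} \<union> {i+1..s}) True"
    by (rule ext_seg) (use assms zx in auto)
  then have "hpx (x 0) (x r) ({0..i} \<union> {j..t-1} \<union> {s+1..j-1} \<union> {i+1..s} \<union> {t..r}) True"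
    by (rule ext_seg) (use assms in auto)
  then show False by (rule finish) (use assms in auto)
qed

lemma Prule:
  assumes "s < \<alpha>" "\<alpha>+3 \<le> t" "t \<le> r" "A (x s) (x t)" "i < s" "\<alpha>+2 \<le> j" "j < t"
    "A (x i) (x j)" "s+2 \<le> k" "k < j" "A (x (t-1)) (x k)" "A (x (k-1)) (x (i+1))"
  shows False
proof -
  have "hpx (x 0) (x i) {0..i} False" by (rule seg) (use assms in auto)
  then have "hpx (x 0) (x (t-1)) ({0..i} \<union> {j..t-1}) False"
    by (rule ext_seg) (use assms in auto)
  then have "hpx (x 0) (x (j-1)) ({0..i} \<union> {j..t-1} \<union> {k..j-1}) False"
    by (rule ext_seg) (use assms in auto)
  then have "hpx (x 0) z ({0..i} \<union> {j..t-1} \<union> {k..j-1}) True"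
    by (rule ext_z) (rule xz, use assms in auto)
  then have "hpx (x 0) (x (k-1)) ({0..i} \<union> {j..t-1} \<union> {k..j-1} \<union> {s+1..k-1}) True"
    by (rule ext_seg) (use assms zx in auto)
  then have "hpx (x 0) (x s) ({0..i} \<union> {j..t-1} \<union> {k..j-1} \<union> {s+1..k-1} \<union> {i+1..s}) True"
    by (rule ext_seg) (use assms in auto)
  then have "hpx (x 0) (x r) ({0..i} \<union> {j..t-1} \<union> {k..j-1} \<union> {s+1..k-1} \<union> {i+1..s} \<union> {t..r}) True"
    by (rule ext_seg) (use assms in auto)
  then show False by (rule finish) (use assms in auto)
qed

lemma P2rule:
  assumes "1 \<le> s" "s < \<alpha>" "\<alpha>+2 \<le> j" "j+2 \<le> t" "t \<le> r" "s+3 \<le> j"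
    "A (x (s-1)) (x j)" "A (x (t-2)) (x (s+2))" "A (x (s+1)) (x (t-1))"
  shows False
proof -
  have "hpx (x 0) (x (s-1)) {0..s-1} False" by (rule seg) (use assms in auto)
  then have "hpx (x 0) (x (t-2)) ({0..s-1} \<union> {j..t-2}) False"
    by (rule ext_seg) (use assms in auto)
  then have "hpx (x 0) (x (j-1)) ({0..s-1} \<union> {j..t-2} \<union> {s+2..j-1}) False"
    by (rule ext_seg) (use assms in auto)
  then have "hpx (x 0) z ({0..s-1} \<union> {j..t-2} \<union> {s+2..j-1}) True"
    by (rule ext_z) (rule xz, use assms in auto)
  then have "hpx (x 0) (x (s+1)) ({0..s-1} \<union> {j..t-2} \<union> {s+2..j-1} \<union> {s..s+1}) True"
    by (rule ext_seg) (use assms zx in auto)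
  then have "hpx (x 0) (x r) ({0..s-1} \<union> {j..t-2} \<union> {s+2..j-1} \<union> {s..s+1} \<union> {t-1..r}) True"
    by (rule ext_seg) (use assms in auto)
  then show False by (rule finish) (use assms in auto)
qed

lemma P2'rule:
  assumes "s < \<alpha>" "\<alpha>+4 \<le> t" "t \<le> r" "s+5 \<le> t"
    "A (x s) (x (t-2))" "A (x (t-2)) (x (s+2))" "A (x (s+1)) (x (t-1))"
  shows False
proof -
  have "hpx (x 0) (x s) {0..s} False" by (rule seg) (use assms in auto)
  then have "hpx (x 0) (x (t-2)) ({0..s} \<union> {t-2..t-2}) False"
    by (rule ext_seg) (use assms in auto)
  then have "hpx (x 0) (x (t-3)) ({0..s} \<union> {t-2..t-2} \<union> {s+2..t-3}) False"
    by (rule ext_seg) (use assms in auto)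
  then have "hpx (x 0) z ({0..s} \<union> {t-2..t-2} \<union> {s+2..t-3}) True"
    by (rule ext_z) (rule xz, use assms in auto)
  then have "hpx (x 0) (x (s+1)) ({0..s} \<union> {t-2..t-2} \<union> {s+2..t-3} \<union> {s+1..s+1}) True"
    by (rule ext_seg) (use assms zx in auto)
  then have "hpx (x 0) (x r) ({0..s} \<union> {t-2..t-2} \<union> {s+2..t-3} \<union> {s+1..s+1} \<union> {t-1..r}) True"
    by (rule ext_seg) (use assms in auto)
  then show False by (rule finish) (use assms in auto)
qed

lemma R1'rule:
  assumes "s+2 \<le> \<alpha>" "\<alpha>+3 \<le> t" "t \<le> r" "s+5 \<le> t"
    "A (x s) (x (t-2))" "A (x (t-3)) (x (s+1))" "A (x (s+1)) (x (t-1))"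
  shows False
proof -
  have "hpx (x 0) (x s) {0..s} False" by (rule seg) (use assms in auto)
  then have "hpx (x 0) (x (t-2)) ({0..s} \<union> {t-2..t-2}) False"
    by (rule ext_seg) (use assms in auto)
  then have "hpx (x 0) z ({0..s} \<union> {t-2..t-2}) True"
    by (rule ext_z) (rule xz, use assms in auto)
  then have "hpx (x 0) (x (t-3)) ({0..s} \<union> {t-2..t-2} \<union> {s+2..t-3}) True"
    by (rule ext_seg) (use assms zx in auto)
  then have "hpx (x 0) (x (s+1)) ({0..s} \<union> {t-2..t-2} \<union> {s+2..t-3} \<union> {s+1..s+1}) True"
    by (rule ext_seg) (use assms in auto)
  then have "hpx (x 0) (x r) ({0..s} \<union> {t-2..t-2} \<union> {s+2..t-3} \<union> {s+1..s+1} \<union> {t-1..r}) True"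
    by (rule ext_seg) (use assms in auto)
  then show False by (rule finish) (use assms in auto)
qed

end

context setting
begin

lemma topchain:
  assumes b: "s < \<alpha>" "\<alpha>+3 \<le> t" "t \<le> r" "A (x s) (x t)" "i < s" "\<alpha>+2 \<le> j" "j < t"
    "A (x i) (x j)"
  shows "s+1 \<le> j-1-2*m \<Longrightarrow> A (x (i+1)) (x (j-1-2*m))"
proof (induction m)
  case 0
  have "\<not> A (x (j-1)) (x (i+1))" using R1rule[OF b] by blast
  then show ?case by (intro flip) (use b in auto)
next
  case (Suc m)
  define k where "k = j-1-2*m"
  have k: "s+3 \<le> k" "k \<le> j-1" using Suc.prems b unfolding k_def by auto
  have F: "A (x (i+1)) (x k)" using Suc.IH k unfolding k_def by auto
  have "\<not> A (x (k-1)) (x (t-1))"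
    by (rule notI, rule Qrule[of "i+1" "t-1" k]) (use F b k in auto)
  then have g: "A (x (t-1)) (x (k-1))" by (intro flip) (use b k in auto)
  have "\<not> A (x (k-1-1)) (x (i+1))"
    by (rule notI, rule Prule[OF b, of "k-1"]) (use g b k in auto)
  then have "A (x (i+1)) (x (k-1-1))" by (intro flip) (use b k in auto)
  moreover have "k-1-1 = j-1-2*Suc m" unfolding k_def by simp
  ultimately show ?case by simp
qed

lemma bottomchain:
  assumes b: "1 \<le> s" "s < \<alpha>" "\<alpha>+3 \<le> t" "t \<le> r" "A (x s) (x t)" "\<alpha>+2 \<le> j" "j < t"
    "A (x (s-1)) (x j)"
  shows "s+1+2*m \<le> j-1 \<Longrightarrow> A (x (s+1+2*m)) (x (t-1))"
proof (induction m)
  case 0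
  have b': "s-1 < s" using b by auto
  have "\<not> A (x (t-1)) (x (s+1))" using R3rule[OF b(2-5) b' b(6-8)] by blast
  then show ?case by (intro flip) (use b in auto)
next
  case (Suc m)
  define k where "k = s+1+2*m"
  have k: "s+1 \<le> k" "k+2 \<le> j-1" using Suc.prems b unfolding k_def by auto
  have g: "A (x k) (x (t-1))" using Suc.IH k unfolding k_def by auto
  have "\<not> A (x s) (x (k+1))"
    by (rule notI, rule Qrule[of s "t-1" "k+1"]) (use g b k in auto)
  then have f: "A (x (k+1)) (x s)" by (intro flip) (use b k in auto)
  have b': "s-1 < s" using b by auto
  have "\<not> A (x (t-1)) (x (k+2))"
    by (rule notI, rule Prule[OF b(2-5) b' b(6-8), of "k+2"]) (use f b k in auto)
  then have "A (x (k+2)) (x (t-1))" by (intro flip) (use b k in auto)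
  moreover have "k+2 = s+1+2*Suc m" unfolding k_def by simp
  ultimately show ?case by simp
qed

lemma claim1:
  assumes b: "s < \<alpha>" "\<alpha>+3 \<le> t" "t \<le> r" "A (x s) (x t)" "i+2 \<le> s" "\<alpha>+2 \<le> j" "j < t"
    "A (x i) (x j)"
  shows False
proof -
  have i: "i < s" using b by auto
  note tc = topchain[OF b(1-4) i b(6-8)]
  have "(\<exists>m. j = s + 2*m + 3) \<or> (\<exists>m. j = s + 2*m + 4)"
    using b by presburger
  then consider m where "j = s + 2*m + 3" | m where "j = s + 2*m + 4" by blast
  then show False
  proof cases
    case 1
    then have F: "A (x (i+1)) (x (s+2))" using tc[of m] by auto
    have "\<not> A (x (s+1)) (x (t-1))"
      by (rule notI, rule Qrule[of "i+1" "t-1" "s+2"]) (use b F in auto)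
    then have "A (x (t-1)) (x (s+1))" by (intro flip) (use b in auto)
    then show False using R3rule[OF b(1-4) i b(6-8)] by blast
  next
    case 2
    then have F: "A (x (i+1)) (x (s+1))" using tc[of "m+1"] by auto
    show False by (rule Qrule[of "i+1" t "s+1"]) (use b F in auto)
  qed
qed

lemma claim2:
  assumes b: "1 \<le> s" "s < \<alpha>" "\<alpha>+3 \<le> t" "t \<le> r" "A (x s) (x t)" "\<alpha>+2 \<le> j" "j < t"
    "A (x (s-1)) (x j)" and t5: "t - s \<noteq> 5"
  shows False
proof -
  have i: "s-1 < s" using b by auto
  have ss: "s - 1 + 1 = s" using b by simp
  have tc: "s+1 \<le> j-1-2*m \<Longrightarrow> A (x s) (x (j-1-2*m))" for m
    using topchain[OF b(2-5) i b(6-8), of m] ss by simp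
  have "\<not> A (x (t-1)) (x (s+1))" using R3rule[OF b(2-5) i b(6-8)] ss by auto
  then have R3: "A (x (s+1)) (x (t-1))" by (intro flip) (use b in auto)
  have "(\<exists>m. j = s + 2*m + 3) \<or> (\<exists>m. j = s + 2*m + 4)"
    using b by presburger
  then consider m where "j = s + 2*m + 3" | m where "j = s + 2*m + 4" by blast
  then show False
  proof cases
    case 1
    then have F: "A (x s) (x (s+2))" using tc[of m] by auto
    show False by (rule Qrule[of s "t-1" "s+2"]) (use b F R3 in auto)
  next
    case 2
    then have F: "A (x s) (x (s+3))" using tc[of m] by (simp add: add.commute)
    consider "j+2 \<le> t" | "j = t-1" using b by linarith
    then show False
    proof cases
      case 1
      have "\<not> A (x (t-2)) (x (s+2))"
        by (rule notI, rule P2rule[of s j t]) (use b 1 2 R3 in auto)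
      then have G: "A (x (s+2)) (x (t-2))" by (intro flip) (use b 1 2 in auto)
      show False by (rule Qrule[of s "t-2" "s+3"]) (use b 1 2 F G in auto)
    next
      case 3: 2
      have tt: "t = s + 2*m + 5" using 2 3 b by simp
      then have m1: "1 \<le> m" using t5 by (cases m) auto
      have e: "j-1-2*0 = t-2" using 3 b by simp
      have "s+1 \<le> j-1-2*0" using b 3 by simp
      then have F2: "A (x s) (x (t-2))" using tc[of 0] e by metis
      consider "\<alpha>+4 \<le> t" | "t = \<alpha>+3" using b by linarith
      then show False
      proof cases
        case 1
        have "\<not> A (x (t-2)) (x (s+2))"
          by (rule notI, rule P2'rule[of s t]) (use b 1 tt m1 F2 R3 in auto)
        then have G: "A (x (s+2)) (x (t-2))" by (intro flip) (use b tt in auto)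
        show False by (rule Qrule[of s "t-2" "s+3"]) (use b 1 tt m1 F G in auto)
      next
        case 4: 2
        have "\<not> A (x (t-3)) (x (s+1))"
          by (rule notI, rule R1'rule[of s t]) (use b 4 tt m1 F2 R3 in auto)
        then have G: "A (x (s+1)) (x (t-3))" by (intro flip) (use b tt m1 in auto)
        have H: "A (x (s+1+2*m)) (x (t-1))"
          by (rule bottomchain[OF b(1-8)]) (use tt 3 in auto)
        have "s+1+2*m = t-3-1" using tt by simp
        then have H': "A (x (t-3-1)) (x (t-1))" using H by simp
        show False by (rule Qrule[of "s+1" "t-1" "t-3"]) (use b 4 tt m1 G H' in auto)
      qed
    qed
  qed
qed

end

theorem lemma3p3:
  fixes V :: "'a set" and A :: "'a \<Rightarrow> 'a \<Rightarrow> bool" and x :: "nat \<Rightarrow> 'a"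
    and r \<alpha> s t :: nat and z :: 'a
  assumes T: "tournament V A"
    and P: "is_path V A (map x [0..<Suc r])"
    and zV: "z \<in> V" and zP: "z \<notin> x ` {0..r}"
    and dom1: "\<forall>i\<in>{\<alpha>+1..r}. A (x i) z"
    and dom2: "\<forall>i\<in>{0..\<alpha>}. A z (x i)"
    and alpha: "2 \<le> \<alpha>" "\<alpha> + 3 \<le> r"
    and nopath: "\<not> (\<exists>ps. is_path V A ps \<and> length ps = r + 2
                    \<and> hd ps = x 0 \<and> last ps = x r
                    \<and> set ps = insert z (x ` {0..r}))"
    and arc: "A (x s) (x t)"
    and s: "1 \<le> s" "s \<le> \<alpha> - 1"
    and t: "\<alpha> + 3 \<le> t" "t \<le> r"
  shows "(s \<ge> 3 \<longrightarrow> (\<forall>i\<in>{0..s-2}. \<forall>j\<in>{\<alpha>+2..t-1}. \<not> A (x i) (x j)))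
       \<and> (t - s \<noteq> 5 \<longrightarrow> (\<forall>j\<in>{\<alpha>+2..t-1}. \<not> A (x (s-1)) (x j)))"
proof -
  interpret setting V A x r \<alpha> z
    by (rule setting.intro) (fact T P zV zP dom1 dom2 alpha nopath)+
  have sa: "s < \<alpha>" using s alpha by linarith
  show ?thesis
  proof (intro conjI impI ballI notI)
    fix i j assume h: "3 \<le> s" "i \<in> {0..s-2}" "j \<in> {\<alpha>+2..t-1}" "A (x i) (x j)"
    show False by (rule claim1[of s t i j]) (use h sa t arc in auto)
  next
    fix j assume h: "t - s \<noteq> 5" "j \<in> {\<alpha>+2..t-1}" "A (x (s-1)) (x j)"
    show False by (rule claim2[of s t j]) (use h s sa t arc in auto)
  qed
qed

end
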